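(* Let $v,v'$ be two different words in the alphabet $\{y,yx\}$ (i.e. products of the subwords $y$ and $yx$, without inverses). Then $v\neq v'$ in the Baumslag–Gersten group $G=\langle x,y,t\mid x^y=x^2,\ x^t=y\rangle$.
   Context: $a^b$ denotes $b^{-1}ab$. *)

theory Defs
  imports Main
begin

text \<open>Generators of the Baumslag--Gersten group G = < x, y, t | x^y = x^2, x^t = y >,
  where a^b = b^-1 a b.\<close>

datatype gen = X | Y | T

type_synonym letter = "gen \<times> bool"

definition inv_letter :: "letter \<Rightarrow> letter" where
  "inv_letter a = (fst a, \<not> snd a)"

definition g :: "gen \<Rightarrow> letter" where "g s = (s, False)"
definition gi :: "gen \<Rightarrow> letter" where "gi s = (s, True)"

text \<open>Relators: x^y x^-2 = y^-1 x y x^-1 x^-1 and x^t y^-1 = t^-1 x t y^-1.\<close>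
definition relators :: "letter list set" where
  "relators = { [gi Y, g X, g Y, gi X, gi X], [gi T, g X, g T, gi Y] }"

inductive eqG :: "letter list \<Rightarrow> letter list \<Rightarrow> bool" where
  refl: "eqG w w"
| sym: "eqG u w \<Longrightarrow> eqG w u"
| trans: "eqG u v \<Longrightarrow> eqG v w \<Longrightarrow> eqG u w"
| cancel: "eqG (u @ [a, inv_letter a] @ w) (u @ w)"
| rel: "r \<in> relators \<Longrightarrow> eqG (u @ r @ w) (u @ w)"

definition block :: "bool \<Rightarrow> letter list" where
  "block b = (if b then [g Y, g X] else [g Y])"

definition yword :: "bool list \<Rightarrow> letter list" where
  "yword bs = concat (map block bs)"

end

theory Submission
  imports Defs Complex_Main
begin

definition Tf :: "real \<times> int \<Rightarrow> real \<times> int" where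
  "Tf p = ((frac (fst p) + of_int (snd p)) * (2::real) powi \<lfloor>fst p\<rfloor>, \<lfloor>fst p\<rfloor>)"

definition Ti :: "real \<times> int \<Rightarrow> real \<times> int" where
  "Ti p = (of_int (snd p) + frac (fst p / (2::real) powi (snd p)), \<lfloor>fst p / (2::real) powi (snd p)\<rfloor>)"

lemma fl_aux: "\<lfloor>frac a + of_int k\<rfloor> = k"
  by (simp add: floor_unique frac_lt_1)

lemma frac_aux: "frac (frac a + of_int k) = frac a"
  by (simp add: frac_def fl_aux)

lemma Ti_Tf: "Ti (Tf p) = p"
proof -
  obtain a k where p: "p = (a,k)" by force
  have "(frac a + of_int k) * 2 powi \<lfloor>a\<rfloor> / (2::real) powi \<lfloor>a\<rfloor> = frac a + of_int k"
    by simp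
  then show ?thesis unfolding p Tf_def Ti_def
    by (simp add: fl_aux frac_aux) (simp add: frac_def)
qed

lemma Tf_Ti: "Tf (Ti p) = p"
proof -
  obtain a k where p: "p = (a,k)" by force
  define c where "c = a / (2::real) powi k"
  have fl: "\<lfloor>of_int k + frac c\<rfloor> = k" using fl_aux[of c k] by (simp add: add.commute)
  have fr: "frac (of_int k + frac c) = frac c" using frac_aux[of c k] by (simp add: add.commute)
  have "(frac c + of_int \<lfloor>c\<rfloor>) * 2 powi k = a" unfolding c_def by (simp add: frac_def)
  then show ?thesis unfolding p Tf_def Ti_def
    by (simp add: fl fr c_def[symmetric])
qed

lemma Tf_X: "Tf (fst p + 1, snd p) = (2 * fst (Tf p), snd (Tf p) + 1)"
  unfolding Tf_def by (simp add: frac_def power_int_add)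

fun act :: "letter \<Rightarrow> real \<times> int \<Rightarrow> real \<times> int" where
  "act (X, False) p = (fst p + 1, snd p)"
| "act (X, True) p = (fst p - 1, snd p)"
| "act (Y, False) p = (2 * fst p, snd p + 1)"
| "act (Y, True) p = (fst p / 2, snd p - 1)"
| "act (T, False) p = Tf p"
| "act (T, True) p = Ti p"

fun acts :: "letter list \<Rightarrow> real \<times> int \<Rightarrow> real \<times> int" where
  "acts [] p = p"
| "acts (l # w) p = acts w (act l p)"

lemma acts_append: "acts (u @ w) p = acts w (acts u p)"
  by (induction u arbitrary: p) auto

lemma act_inv: "act (inv_letter a) (act a p) = p"
  by (cases a; case_tac aa; case_tac b) (auto simp: inv_letter_def Ti_Tf Tf_Ti)

lemma rel_trivial: "r \<in> relators \<Longrightarrow> acts r p = p"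
proof -
  assume "r \<in> relators"
  then consider "r = [gi Y, g X, g Y, gi X, gi X]" | "r = [gi T, g X, g T, gi Y]"
    unfolding relators_def by blast
  then show ?thesis
  proof cases
    case 1 then show ?thesis by (simp add: g_def gi_def)
  next
    case 2
    have "Tf (fst (Ti p) + 1, snd (Ti p)) = (2 * fst p, snd p + 1)"
      using Tf_X[of "Ti p"] by (simp add: Tf_Ti)
    then show ?thesis using 2 by (simp add: g_def gi_def)
  qed
qed

lemma eqG_acts: "eqG u w \<Longrightarrow> acts u p = acts w p"
proof (induction arbitrary: p rule: eqG.induct)
  case (cancel u a w) then show ?case by (simp add: acts_append act_inv)
next
  case (rel r u w) then show ?case by (simp add: acts_append rel_trivial)
qed auto

fun bval :: "bool list \<Rightarrow> nat" where
  "bval [] = 0"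
| "bval (b # v) = (if b then 2 ^ length v else 0) + bval v"

lemma bval_lt: "bval v < 2 ^ length v"
  by (induction v) auto

lemma acts_yword: "acts (yword v) (a, k) = (2 ^ length v * a + real (bval v), k + int (length v))"
proof (induction v arbitrary: a k)
  case Nil then show ?case by (simp add: yword_def)
next
  case (Cons b v)
  have "yword (b # v) = block b @ yword v" by (simp add: yword_def)
  then show ?case using Cons
    by (cases b) (auto simp: acts_append block_def g_def algebra_simps)
qed

lemma bval_inj: "length v = length v' \<Longrightarrow> bval v = bval v' \<Longrightarrow> v = v'"
proof (induction v arbitrary: v')
  case Nil then show ?case by simp
next
  case (Cons b v)
  then obtain b' w where v': "v' = b' # w" by (cases v') auto
  have l: "length w = length v" using Cons.prems v' by simp
  have "b = b'"
    using Cons.prems(2) v' l bval_lt[of v] bval_lt[of w]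
    by (cases b; cases b') auto
  then have "bval v = bval w" using Cons.prems(2) v' l by (cases b') simp_all
  then show ?case using Cons.IH[of w] \<open>b = b'\<close> v' l by simp
qed

theorem lemma2p2:
  fixes v v' :: "bool list"
  assumes "v \<noteq> v'"
  shows "\<not> eqG (yword v) (yword v')"
proof
  assume "eqG (yword v) (yword v')"
  then have "acts (yword v) (0,0) = acts (yword v') (0,0)" by (rule eqG_acts)
  then have "length v = length v'" "bval v = bval v'" by (simp_all add: acts_yword)
  then show False using assms bval_inj by blast
qed

end
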